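(* Let $B:=\{\omega\in X\mid\xi(\omega)\in\chi_{\mathcal{G}}(\omega)\}$. Then $B\in\mathcal{B}_X$ and $\mathbb{P}(B)=1$.
   Context: $X$ is a Polish space with Borel $\sigma$-algebra $\mathcal{B}_X$, $\mathbb{P}$ a probability measure on $(X,\mathcal{B}_X)$, $\mathcal{G}\subseteq\mathcal{B}_X$ a countably generated sub-$\sigma$-algebra, and $\xi:X\to\mathbb{R}^d$ Borel measurable. For $\omega\in X$ let $A_\omega=\bigcap\{A\in\mathcal{G}\mid\omega\in A\}$. Fix a proper regular conditional probability $\mathbb{P}_{\mathcal{G}}:X\times\mathcal{B}_X\to[0,1]$, i.e.: (a) $\mathbb{P}_{\mathcal{G}}(\omega,\cdot)$ is a probability measure for every $\omega$; (b) for each $B\in\mathcal{B}_X$, $\mathbb{P}_{\mathcal{G}}(\cdot,B)$ is $\mathcal{G}$-measurable and a version of $E_{\mathbb{P}}[\mathbf{1}_B\mid\mathcal{G}]$; (c) there is $N\in\mathcal{G}$ with $\mathbb{P}(N)=0$ such that $\mathbb{P}_{\mathcal{G}}(\omega,B)=\mathbf{1}_B(\omega)$ for all $\omega\in X\setminus N$, $B\in\mathcal{G}$, and $\mathbb{P}_{\mathcal{G}}(\omega,A_\omega)=1$ for $\omega\in X\setminus N$; (d) $\mathbb{P}(A\cap B)=\int_A\mathbb{P}_{\mathcal{G}}(\omega,B)\,\mathbb{P}(d\omega)$ for $A\in\mathcal{G}$, $B\in\mathcal{B}_X$. Define $P_\xi(\omega,C)=\mathbb{P}_{\mathcal{G}}(\omega,\{\tilde\omega\in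 A_\omega\mid\xi(\tilde\omega)\in C\})$ for Borel $C\subseteq\mathbb{R}^d$, and the random set $\chi_{\mathcal{G}}(\omega)=\{x\in\mathbb{R}^d\mid P_\xi(\omega,B_\varepsilon(x))>0\ \forall\varepsilon>0\}$ for $\omega\in X\setminus N$ (the support of $P_\xi(\omega,\cdot)$), and $\chi_{\mathcal{G}}(\omega)=\mathbb{R}^d$ for $\omega\in N$; $B_\varepsilon(x)$ is the open ball of radius $\varepsilon$ centered at $x$. *)

theory Defs
  imports "HOL-Probability.Probability"
begin

definition atom_of :: "'a set set \<Rightarrow> 'a \<Rightarrow> 'a set" where
  "atom_of G \<omega> = \<Inter>{A \<in> G. \<omega> \<in> A}"

definition cond_law :: "'a set set \<Rightarrow> ('a \<Rightarrow> 'a measure) \<Rightarrow> ('a \<Rightarrow> 'b) \<Rightarrow> 'a \<Rightarrow> 'b set \<Rightarrow> real" where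
  "cond_law G K \<xi> \<omega> C = measure (K \<omega>) {w \<in> atom_of G \<omega>. \<xi> w \<in> C}"

definition chi_set :: "'a set set \<Rightarrow> ('a \<Rightarrow> 'a measure) \<Rightarrow> ('a \<Rightarrow> 'b::metric_space) \<Rightarrow> 'a set \<Rightarrow> 'a \<Rightarrow> 'b set" where
  "chi_set G K \<xi> N \<omega> =
     (if \<omega> \<in> N then UNIV
      else {x. \<forall>\<epsilon>>0. cond_law G K \<xi> \<omega> (ball x \<epsilon>) > 0})"

end

theory Submission
  imports Defs
begin

lemma full_inter:
  assumes Q: "prob_space Q" and A1: "measure Q A = 1" and S: "S \<in> sets Q"
  shows "measure Q (A \<inter> S) = measure Q S"
proof -
  interpret prob_space Q by (rule Q)
  have A: "A \<in> sets Q" using A1 measure_notin_sets by fastforce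
  have "measure Q (space Q - A) = 0" using prob_compl[OF A] A1 by simp
  hence nul: "space Q - A \<in> null_sets Q"
    using A by (simp add: null_sets_def emeasure_eq_measure)
  have "A \<inter> S = S - (space Q - A)" using sets.sets_into_space[OF S] by blast
  thus ?thesis using measure_Diff_null_set[OF S nul] by simp
qed

theorem lemma5p5:
  fixes M :: "'a::polish_space measure"
    and G :: "'a set set"
    and \<xi> :: "'a \<Rightarrow> 'b::euclidean_space"
    and K :: "'a \<Rightarrow> 'a measure"
    and N :: "'a set"
  assumes M_borel: "sets M = sets borel"
    and M_prob: "prob_space M"
    and G_sub: "G \<subseteq> sets borel"
    and G_cg: "\<exists>C. countable C \<and> C \<subseteq> Pow UNIV \<and> G = sigma_sets UNIV C"
    and \<xi>_meas: "\<xi> \<in> borel_measurable borel"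
    and K_prob: "\<And>\<omega>. prob_space (K \<omega>)"
    and K_sets: "\<And>\<omega>. sets (K \<omega>) = sets borel"
    and K_meas: "\<And>B. B \<in> sets borel \<Longrightarrow> (\<lambda>\<omega>. measure (K \<omega>) B) \<in> borel_measurable (sigma UNIV G)"
    and K_disint: "\<And>A B. A \<in> G \<Longrightarrow> B \<in> sets borel \<Longrightarrow>
                     measure M (A \<inter> B) = (\<integral>\<omega>\<in>A. measure (K \<omega>) B \<partial>M)"
    and N_G: "N \<in> G"
    and N_null: "measure M N = 0"
    and K_proper: "\<And>\<omega> B. \<omega> \<notin> N \<Longrightarrow> B \<in> G \<Longrightarrow> measure (K \<omega>) B = indicator B \<omega>"
    and K_atom: "\<And>\<omega>. \<omega> \<notin> N \<Longrightarrow> measure (K \<omega>) (atom_of G \<omega>) = 1"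
  shows "{\<omega>. \<xi> \<omega> \<in> chi_set G K \<xi> N \<omega>} \<in> sets borel
         \<and> measure M {\<omega>. \<xi> \<omega> \<in> chi_set G K \<xi> N \<omega>} = 1"
proof -
  interpret P: prob_space M by (rule M_prob)
  have spM: "space M = UNIV" using sets_eq_imp_space_eq[OF M_borel] by simp
  have pre: "\<xi> -` U \<in> sets borel" if "open U" for U
    using measurable_sets[OF \<xi>_meas, of U] that by simp
  have cl: "cond_law G K \<xi> \<omega> U = measure (K \<omega>) (\<xi> -` U)" if "\<omega> \<notin> N" "open U" for \<omega> U
  proof -
    have "{w \<in> atom_of G \<omega>. \<xi> w \<in> U} = atom_of G \<omega> \<inter> \<xi> -` U" by auto
    thus ?thesis unfolding cond_law_def
      using full_inter[OF K_prob K_atom[OF that(1)], of "\<xi> -` U"] pre[OF that(2)] K_sets by simp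
  qed
  have Kfin: "finite_measure (K \<omega>)" for \<omega> using K_prob[of \<omega>] by (simp add: prob_space_def)
  obtain C where C: "countable C" "C \<subseteq> Pow UNIV" "G = sigma_sets UNIV C" using G_cg by blast
  have sG: "sets (sigma UNIV G) = G"
  proof -
    have "sigma_algebra UNIV G" using C sigma_algebra_sigma_sets by blast
    hence "sigma_sets UNIV G = G" by (rule sigma_algebra.sigma_sets_eq)
    thus ?thesis by (simp add: sets_measure_of_conv)
  qed
  obtain \<B> :: "'b set set" where B: "countable \<B>" "\<And>C. C \<in> \<B> \<Longrightarrow> open C"
       "\<And>S. open S \<Longrightarrow> \<exists>U. U \<subseteq> \<B> \<and> S = \<Union>U" using univ_second_countable by blast
  define A where "A U = {\<omega>. measure (K \<omega>) (\<xi> -` U) = 0}" for U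
  define E where "E U = (UNIV - N) \<inter> \<xi> -` U \<inter> A U" for U
  have AG: "A U \<in> G" if "open U" for U
  proof -
    have "(\<lambda>\<omega>. measure (K \<omega>) (\<xi> -` U)) \<in> borel_measurable (sigma UNIV G)"
      using K_meas pre that by blast
    hence "(\<lambda>\<omega>. measure (K \<omega>) (\<xi> -` U)) -` {0} \<inter> space (sigma UNIV G) \<in> sets (sigma UNIV G)"
      by (rule measurable_sets) simp
    thus ?thesis using sG by (simp add: A_def vimage_def)
  qed
  have Eb: "E U \<in> sets borel" if "open U" for U
  proof -
    have "N \<in> sets borel" "A U \<in> sets borel" using N_G AG[OF that] G_sub by auto
    thus ?thesis unfolding E_def using pre[OF that] by auto
  qed
  have En: "E U \<in> null_sets M" if "open U" for U
  proof -
    have "measure M (A U \<inter> \<xi> -` U) = (\<integral>\<omega>\<in>A U. measure (K \<omega>) (\<xi> -` U) \<partial>M)"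
      using K_disint AG[OF that] pre[OF that] by blast
    also have "\<dots> = 0"
    proof -
      have "(\<lambda>\<omega>. indicator (A U) \<omega> *\<^sub>R measure (K \<omega>) (\<xi> -` U)) = (\<lambda>\<omega>. 0)"
        by (auto simp: A_def indicator_def fun_eq_iff)
      thus ?thesis by (simp add: set_lebesgue_integral_def)
    qed
    finally have z: "measure M (A U \<inter> \<xi> -` U) = 0" .
    have s1: "A U \<inter> \<xi> -` U \<in> sets M" using AG[OF that] G_sub pre[OF that] M_borel by auto
    have "E U \<subseteq> A U \<inter> \<xi> -` U" unfolding E_def by auto
    moreover have "A U \<inter> \<xi> -` U \<in> null_sets M"
      using s1 z by (simp add: null_sets_def P.emeasure_eq_measure)
    moreover have "E U \<in> sets M" using Eb[OF that] M_borel by simp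
    ultimately show ?thesis using null_sets_subset by blast
  qed
  have key: "{\<omega>. \<xi> \<omega> \<in> chi_set G K \<xi> N \<omega>} = UNIV - (\<Union>U\<in>\<B>. E U)"
  proof (intro set_eqI iffI)
    fix \<omega> assume "\<omega> \<in> {\<omega>. \<xi> \<omega> \<in> chi_set G K \<xi> N \<omega>}"
    hence h: "\<xi> \<omega> \<in> chi_set G K \<xi> N \<omega>" by simp
    show "\<omega> \<in> UNIV - (\<Union>U\<in>\<B>. E U)"
    proof (rule ccontr)
      assume "\<omega> \<notin> UNIV - (\<Union>U\<in>\<B>. E U)"
      then obtain U where U: "U \<in> \<B>" "\<omega> \<notin> N" "\<xi> \<omega> \<in> U" "measure (K \<omega>) (\<xi> -` U) = 0"
        unfolding E_def A_def by auto
      have oU: "open U" using B(2) U(1) .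
      then obtain e where e: "e > 0" "ball (\<xi> \<omega>) e \<subseteq> U" using U(3) open_contains_ball by blast
      have "cond_law G K \<xi> \<omega> (ball (\<xi> \<omega>) e) > 0" using h U(2) e(1) by (simp add: chi_set_def)
      moreover have "cond_law G K \<xi> \<omega> (ball (\<xi> \<omega>) e) = measure (K \<omega>) (\<xi> -` ball (\<xi> \<omega>) e)"
        using cl U(2) by simp
      moreover have "measure (K \<omega>) (\<xi> -` ball (\<xi> \<omega>) e) \<le> measure (K \<omega>) (\<xi> -` U)"
        using finite_measure.finite_measure_mono[OF Kfin, of "\<xi> -` ball (\<xi> \<omega>) e" "\<xi> -` U"] e(2) pre[OF oU] K_sets
        by auto
      ultimately show False using U(4) by simp
    qed
  next
    fix \<omega> assume a: "\<omega> \<in> UNIV - (\<Union>U\<in>\<B>. E U)"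
    show "\<omega> \<in> {\<omega>. \<xi> \<omega> \<in> chi_set G K \<xi> N \<omega>}"
    proof (cases "\<omega> \<in> N")
      case True thus ?thesis by (simp add: chi_set_def)
    next
      case nN: False
      show ?thesis
      proof (rule ccontr)
        assume "\<omega> \<notin> {\<omega>. \<xi> \<omega> \<in> chi_set G K \<xi> N \<omega>}"
        then obtain e where e: "e > 0" "\<not> cond_law G K \<xi> \<omega> (ball (\<xi> \<omega>) e) > 0"
          using nN by (auto simp: chi_set_def)
        have m0: "measure (K \<omega>) (\<xi> -` ball (\<xi> \<omega>) e) = 0"
          using e(2) cl[OF nN, of "ball (\<xi> \<omega>) e"] measure_nonneg[of "K \<omega>" "\<xi> -` ball (\<xi> \<omega>) e"] by (simp add: not_less)
        obtain W where W: "W \<subseteq> \<B>" "ball (\<xi> \<omega>) e = \<Union>W" using B(3)[of "ball (\<xi> \<omega>) e"] by auto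
        have "\<xi> \<omega> \<in> \<Union>W" using W(2) e(1) by (metis centre_in_ball)
        then obtain U where U: "U \<in> W" "\<xi> \<omega> \<in> U" by blast
        have oU: "open U" using B(2) U(1) W(1) by blast
        have "measure (K \<omega>) (\<xi> -` U) \<le> measure (K \<omega>) (\<xi> -` ball (\<xi> \<omega>) e)"
          using finite_measure.finite_measure_mono[OF Kfin, of "\<xi> -` U" "\<xi> -` ball (\<xi> \<omega>) e"] U W(2)
            pre[OF open_ball[of "\<xi> \<omega>" e]] K_sets by blast
        hence "measure (K \<omega>) (\<xi> -` U) = 0" using m0 measure_nonneg[of "K \<omega>" "\<xi> -` U"]
          by linarith
        hence "\<omega> \<in> E U" using nN U(2) by (simp add: E_def A_def)
        thus False using a U(1) W(1) by blast
      qed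
    qed
  qed
  have Un: "(\<Union>U\<in>\<B>. E U) \<in> null_sets M" using null_sets_UN'[OF B(1)] En B(2) by blast
  have Ub: "(\<Union>U\<in>\<B>. E U) \<in> sets borel" using Un M_borel by auto
  show ?thesis
  proof
    show "{\<omega>. \<xi> \<omega> \<in> chi_set G K \<xi> N \<omega>} \<in> sets borel" using key Ub by auto
    have "measure M (space M - (\<Union>U\<in>\<B>. E U)) = 1 - measure M (\<Union>U\<in>\<B>. E U)"
      using P.prob_compl Un by auto
    also have "\<dots> = 1" using Un by (simp add: P.emeasure_eq_measure null_sets_def)
    finally show "measure M {\<omega>. \<xi> \<omega> \<in> chi_set G K \<xi> N \<omega>} = 1" using key spM by simp
  qed
qed

end
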